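(* Let $A,B\in\mathbb{R}^{p\times p}$, $a,b\in\mathbb{R}^p$, $\alpha,\beta\in\mathbb{R}$, and let $$f(x)=\frac{g(x)}{q(x)}=\frac{\frac12\langle Ax,x\rangle+\langle a,x\rangle+\alpha}{\frac12\langle Bx,x\rangle+\langle b,x\rangle+\beta}.$$ Let $0<m<M$ and $K=\{x\in\mathbb{R}^p: m\le q(x)\le M\}$. Assume $A$ is positive definite and at least one of the following holds: (a) $B=0$; (b) $g$ is non-negative on $K$ and $B$ is negative semi-definite; (c) $g$ is non-positive on $K$ and $B$ is positive semi-definite. Let $x^*$ be a minimizer of $f$ on $K$. Then $f$ is $\kappa$-quasar-convex on $K$ with respect to $x^*$ with $\kappa=\frac mM$, and $f$ is $(\frac\kappa2,\gamma)$-strongly quasar-convex on $K$ with respect to $x^*$, where $\gamma=\frac{\sigma_{\min}(A)}{m}$. Moreover, for every $\lambda\in(0,1)$, $f$ is $\big(\lambda\kappa,(\lambda^{-1}-1)\frac{\sigma_{\min}(A)}{4M}\big)$-strongly quasar-convex on $K$ with respect to $x^*$.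
   Context: $\sigma_{\min}(A)$ is the minimum eigenvalue of $A$. For $\kappa\in(0,1]$ and $\mu\ge0$, $f$ is $(\kappa,\mu)$-strongly quasar-convex on $K$ with respect to $x^*$ if $f(x^* )\ge f(x)+\frac1\kappa\langle\nabla f(x),x^*-x\rangle+\frac\mu2\|x^*-x\|^2$ for all $x\in K$; $\kappa$-quasar-convex means the case $\mu=0$. *)

theory Defs
  imports "HOL-Analysis.Analysis"
begin

definition pos_def_mat :: "real^'n^'n \<Rightarrow> bool" where
  "pos_def_mat A \<longleftrightarrow> transpose A = A \<and> (\<forall>x. x \<noteq> 0 \<longrightarrow> (A *v x) \<bullet> x > 0)"

definition pos_semidef_mat :: "real^'n^'n \<Rightarrow> bool" where
  "pos_semidef_mat A \<longleftrightarrow> transpose A = A \<and> (\<forall>x. (A *v x) \<bullet> x \<ge> 0)"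

definition neg_semidef_mat :: "real^'n^'n \<Rightarrow> bool" where
  "neg_semidef_mat A \<longleftrightarrow> transpose A = A \<and> (\<forall>x. (A *v x) \<bullet> x \<le> 0)"

definition min_eigenvalue :: "real^'n^'n \<Rightarrow> real" where
  "min_eigenvalue A = Inf {l. \<exists>v. v \<noteq> 0 \<and> A *v v = l *\<^sub>R v}"

definition strongly_quasar_convex ::
  "(real^'n \<Rightarrow> real) \<Rightarrow> (real^'n) set \<Rightarrow> real^'n \<Rightarrow> real \<Rightarrow> real \<Rightarrow> bool" where
  "strongly_quasar_convex f K xs \<kappa> \<mu> \<longleftrightarrow>
     0 < \<kappa> \<and> \<kappa> \<le> 1 \<and> 0 \<le> \<mu> \<and>
     (\<forall>x\<in>K. f differentiable (at x) \<and>
        f xs \<ge> f x + (1/\<kappa>) * frechet_derivative f (at x) (xs - x)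
               + (\<mu>/2) * (norm (xs - x))\<^sup>2)"

definition quasar_convex ::
  "(real^'n \<Rightarrow> real) \<Rightarrow> (real^'n) set \<Rightarrow> real^'n \<Rightarrow> real \<Rightarrow> bool" where
  "quasar_convex f K xs \<kappa> \<longleftrightarrow> strongly_quasar_convex f K xs \<kappa> 0"

end

theory Submission
  imports Defs
begin

lemma sym_inner:
  fixes A :: "real^'n^'n"
  assumes "transpose A = A"
  shows "(A *v x) \<bullet> y = x \<bullet> (A *v y)"
  by (metis assms vector_transpose_matrix dot_lmul_matrix)

lemma quad_zero:
  fixes c e :: real
  assumes "0 \<le> c" "\<And>t. 0 \<le> 2*t*c + t^2*e"
  shows "c = 0"
proof -
  define t where "t = - c / (\<bar>e\<bar> + 1)"
  have p: "\<bar>e\<bar> + 1 > 0" by simp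
  have "0 \<le> 2*t*c + t^2*e" using assms(2) by blast
  hence "0 \<le> (\<bar>e\<bar> + 1)^2 * (2*t*c + t^2*e)" by simp
  also have "(\<bar>e\<bar> + 1)^2 * (2*t*c + t^2*e) = -2*c^2*(\<bar>e\<bar>+1) + c^2*e"
  proof -
    have "\<And>z::real. 0 < z \<Longrightarrow> (z^2 * (2*(- c / z)*c + (- c / z)^2*e)) = (-2*c^2*z + c^2*e)"
      by (simp add: field_simps power2_eq_square)
    thus ?thesis using p unfolding t_def by blast
  qed
  also have "\<dots> \<le> -2*c^2*(\<bar>e\<bar>+1) + c^2*(\<bar>e\<bar>+1)"
    by (intro add_left_mono mult_left_mono) auto
  finally have "c^2*(\<bar>e\<bar>+1) \<le> 0" by linarith
  hence "c^2 \<le> 0" using p by (simp add: mult_le_0_iff)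
  thus ?thesis by simp
qed

lemma eig:
  fixes A :: "real^'n^'n"
  assumes "pos_def_mat A"
  shows "0 \<le> min_eigenvalue A \<and> (\<forall>d. min_eigenvalue A * (norm d)^2 \<le> (A *v d) \<bullet> d)"
proof -
  have symA: "transpose A = A" and pd: "\<And>x. x \<noteq> 0 \<Longrightarrow> (A *v x) \<bullet> x > 0"
    using assms unfolding pos_def_mat_def by auto
  define R where "R = (\<lambda>x::real^'n. (A *v x) \<bullet> x)"
  have "sphere (0::real^'n) 1 \<noteq> {}"
  proof -
    have "axis undefined 1 \<in> sphere (0::real^'n) 1" using norm_axis_1 by simp
    thus ?thesis by blast
  qed
  moreover have "continuous_on (sphere 0 1) R" unfolding R_def
    by (intro continuous_intros)
  ultimately obtain v where v: "v \<in> sphere 0 1" and vmin: "\<forall>y\<in>sphere 0 1. R v \<le> R y"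
    using continuous_attains_inf[of "sphere 0 1" R] by auto
  define l where "l = R v"
  have nv: "norm v = 1" using v by simp
  have hom: "l * (norm w)^2 \<le> R w" for w
  proof (cases "w = 0")
    case True thus ?thesis by (simp add: R_def)
  next
    case False
    define u where "u = (1 / norm w) *\<^sub>R w"
    have "u \<in> sphere 0 1" using False by (simp add: u_def)
    hence "l \<le> R u" using vmin l_def by auto
    also have "R u = R w / (norm w)^2"
      by (simp add: R_def u_def matrix_vector_mult_scaleR power2_eq_square)
    finally show ?thesis using False by (simp add: field_simps)
  qed
  define r where "r = A *v v - l *\<^sub>R v"
  have "r \<bullet> r = 0"
  proof (rule quad_zero[where e = "R r - l * (r \<bullet> r)"])
    show "0 \<le> r \<bullet> r" by simp
    fix t
    have h: "l * (norm (v + t *\<^sub>R r))^2 \<le> R (v + t *\<^sub>R r)" by (rule hom)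
    have e1: "R (v + t *\<^sub>R r) = R v + 2*t*((A *v v) \<bullet> r) + t^2 * R r"
      using sym_inner[OF symA, of r v]
      by (simp add: R_def matrix_vector_right_distrib matrix_vector_mult_scaleR
          inner_add_left inner_add_right power2_eq_square algebra_simps inner_commute)
    have e2: "(norm (v + t *\<^sub>R r))^2 = 1 + 2*t*(v \<bullet> r) + t^2 * (r \<bullet> r)"
    proof -
      have vv: "v \<bullet> v = 1" using nv by (metis power2_norm_eq_inner power_one)
      show ?thesis unfolding power2_norm_eq_inner using vv
        by (simp add: inner_add_left inner_add_right power2_eq_square algebra_simps inner_commute)
    qed
    have e3: "r \<bullet> r = (A *v v) \<bullet> r - l * (v \<bullet> r)"
      by (simp add: r_def inner_diff_left)
    show "0 \<le> 2*t*(r \<bullet> r) + t^2*(R r - l * (r \<bullet> r))"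
      using h unfolding e1 e2 e3 l_def by (simp add: algebra_simps)
  qed
  hence eigv: "A *v v = l *\<^sub>R v" unfolding r_def by simp
  have v0: "v \<noteq> 0" using nv by auto
  define E where "E = {lam. \<exists>w. w \<noteq> 0 \<and> A *v w = lam *\<^sub>R w}"
  have lE: "l \<in> E" using eigv v0 unfolding E_def by auto
  have Epos: "0 \<le> x" if "x \<in> E" for x
  proof -
    have "\<exists>w. w \<noteq> 0 \<and> A *v w = x *\<^sub>R w" using that by (simp add: E_def)
    then obtain w where w: "w \<noteq> 0" "A *v w = x *\<^sub>R w" by blast
    have "0 < (A *v w) \<bullet> w" using pd w(1) by blast
    also have "\<dots> = x * (w \<bullet> w)" using w(2) by simp
    moreover have "0 \<le> w \<bullet> w" by simp
    ultimately show ?thesis by (auto simp: zero_less_mult_iff)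
  qed
  have bdd: "bdd_below E" using Epos by (auto simp: bdd_below_def)
  have me: "min_eigenvalue A = Inf E" unfolding min_eigenvalue_def E_def by simp
  have le: "min_eigenvalue A \<le> l" unfolding me using cInf_lower[OF lE bdd] .
  have ge: "0 \<le> min_eigenvalue A" unfolding me using lE Epos by (intro cInf_greatest) auto
  show ?thesis
  proof (intro conjI allI ge)
    fix d :: "real^'n"
    have "min_eigenvalue A * (norm d)^2 \<le> l * (norm d)^2"
      using le by (intro mult_right_mono) auto
    also have "\<dots> \<le> (A *v d) \<bullet> d" using hom[of d] by (simp add: R_def)
    finally show "min_eigenvalue A * (norm d)^2 \<le> (A *v d) \<bullet> d" .
  qed
qed

lemma mv_has_derivative [derivative_intros]:
  "(((*v) (A::real^'n^'m)) has_derivative ((*v) A)) F"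
  by (rule bounded_linear_imp_has_derivative) (rule matrix_vector_mul_bounded_linear)

lemma core:
  fixes Q Qs F Fs D s t k mu n2 m M :: real
  assumes QD: "Q*D = Qs*(Fs - F) - s/2 + F*t/2" and Ft: "F*t \<le> 0" and FF: "Fs \<le> F"
    and Q: "m \<le> Q" "Q \<le> M" and Qs: "m \<le> Qs" and m: "0 < m" and k: "0 < k" "k \<le> m/M"
    and s: "0 \<le> s" and mu: "0 \<le> mu" and n2: "0 \<le> n2" and sk: "k*M*mu*n2 \<le> s"
  shows "F + (1/k)*D + mu/2*n2 \<le> Fs"
proof -
  have Qp: "0 < Q" using Q m by linarith
  have Mp: "0 < M" using Q m by linarith
  have kQ: "k*Q \<le> m"
  proof -
    have "k*Q \<le> (m/M)*M" using k Q(2) Qp Mp by (intro mult_mono) auto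
    thus ?thesis using Mp by simp
  qed
  have h1: "0 \<le> (Qs - k*Q)*(F-Fs)" using kQ Qs FF by (intro mult_nonneg_nonneg) auto
  have h2: "k*Q*mu*n2 \<le> k*M*mu*n2"
    using k Q(2) mu n2 by (intro mult_right_mono mult_left_mono) auto
  have main: "k*Q*(F + mu/2*n2) + Q*D \<le> k*Q*Fs"
    using QD Ft h1 h2 sk by (simp add: algebra_simps)
  have "k*Q*(F + (1/k)*D + mu/2*n2) = k*Q*(F + mu/2*n2) + Q*D"
    using k by (simp add: algebra_simps)
  hence "k*Q*(F + (1/k)*D + mu/2*n2) \<le> k*Q*Fs" using main by linarith
  thus ?thesis using k Qp by (simp add: mult_le_cancel_left_pos)
qed

theorem proposition5p5:
  fixes A B :: "real^'p^'p" and a b xs :: "real^'p" and \<alpha> \<beta> m M :: real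
    and g q f :: "real^'p \<Rightarrow> real" and K :: "(real^'p) set"
  assumes g_def: "\<And>x. g x = (1/2) * ((A *v x) \<bullet> x) + a \<bullet> x + \<alpha>"
    and q_def: "\<And>x. q x = (1/2) * ((B *v x) \<bullet> x) + b \<bullet> x + \<beta>"
    and f_def: "\<And>x. f x = g x / q x"
    and mM: "0 < m" "m < M"
    and K_def: "K = {x. m \<le> q x \<and> q x \<le> M}"
    and A_pd: "pos_def_mat A"
    and cases: "B = 0 \<or> ((\<forall>x\<in>K. g x \<ge> 0) \<and> neg_semidef_mat B)
                      \<or> ((\<forall>x\<in>K. g x \<le> 0) \<and> pos_semidef_mat B)"
    and xs_min: "xs \<in> K" "\<forall>x\<in>K. f xs \<le> f x"
  shows "quasar_convex f K xs (m / M)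
       \<and> strongly_quasar_convex f K xs ((m / M) / 2) (min_eigenvalue A / m)
       \<and> (\<forall>lam. 0 < lam \<and> lam < 1 \<longrightarrow>
            strongly_quasar_convex f K xs (lam * (m / M))
              ((1 / lam - 1) * min_eigenvalue A / (4 * M)))"
proof -
  define \<sigma> where "\<sigma> = min_eigenvalue A"
  have sig: "0 \<le> \<sigma>" "\<And>d. \<sigma> * (norm d)^2 \<le> (A *v d) \<bullet> d"
    using eig[OF A_pd] unfolding \<sigma>_def by auto
  have fe: "f = (\<lambda>x. g x / q x)" using f_def by (simp add: fun_eq_iff)
  have Mp: "0 < M" using mM by linarith
  have key: "f differentiable (at x) \<and>
      f x + (1/k) * frechet_derivative f (at x) (xs - x) + (mu/2) * (norm (xs - x))\<^sup>2 \<le> f xs"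
    if x: "x \<in> K" and k: "0 < k" "k \<le> m/M" and mu: "0 \<le> mu" and sk: "k*M*mu \<le> \<sigma>" for x k mu
  proof -
    have Q: "m \<le> q x" "q x \<le> M" using x K_def by auto
    have Qs: "m \<le> q xs" "q xs \<le> M" using xs_min(1) K_def by auto
    have Qp: "0 < q x" using Q mM by linarith
    define G where "G = (\<lambda>h. (1/2)*((A *v x) \<bullet> h + (A *v h) \<bullet> x) + a \<bullet> h)"
    define H where "H = (\<lambda>h. (1/2)*((B *v x) \<bullet> h + (B *v h) \<bullet> x) + b \<bullet> h)"
    have ge: "g = (\<lambda>y. (1/2) * ((A *v y) \<bullet> y) + a \<bullet> y + \<alpha>)" using g_def by (simp add: fun_eq_iff)
    have qe: "q = (\<lambda>y. (1/2) * ((B *v y) \<bullet> y) + b \<bullet> y + \<beta>)" using q_def by (simp add: fun_eq_iff)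
    have gd: "(g has_derivative G) (at x)" unfolding ge G_def
      by (auto intro!: derivative_eq_intros simp: algebra_simps)
    have qd: "(q has_derivative H) (at x)" unfolding qe H_def
      by (auto intro!: derivative_eq_intros simp: algebra_simps)
    have fd: "(f has_derivative (\<lambda>h. (G h * q x - g x * H h) / (q x * q x))) (at x)"
      unfolding fe using gd qd Qp by (intro has_derivative_divide') auto
    have diff: "f differentiable (at x)" using fd by (rule differentiableI)
    have fr: "frechet_derivative f (at x) = (\<lambda>h. (G h * q x - g x * H h) / (q x * q x))"
      using frechet_derivative_at[OF fd] by simp
    define d where "d = xs - x"
    have xsd: "xs = x + d" by (simp add: d_def)
    define s where "s = (A *v d) \<bullet> d"
    define t where "t = (B *v d) \<bullet> d"
    have gx: "g xs = g x + G d + s/2" unfolding xsd g_def G_def s_def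
      by (simp add: matrix_vector_right_distrib inner_add_left inner_add_right algebra_simps)
    have qx: "q xs = q x + H d + t/2" unfolding xsd q_def H_def t_def
      by (simp add: matrix_vector_right_distrib inner_add_left inner_add_right algebra_simps)
    have Qsp: "0 < q xs" using Qs mM by linarith
    have gxs: "g xs = f xs * q xs" using Qsp f_def by simp
    have gxx: "g x = f x * q x" using Qp f_def by simp
    have QD: "q x * frechet_derivative f (at x) d = q xs * (f xs - f x) - s/2 + f x * t/2"
    proof -
      have "q x * frechet_derivative f (at x) d = G d - f x * H d"
        unfolding fr using Qp gxx by (simp add: field_simps)
      also have "\<dots> = q xs * (f xs - f x) - s/2 + f x * t/2"
      proof -
        have e1: "G d = f xs * q xs - f x * q x - s/2" using gx gxs gxx by linarith
        have e2: "H d = q xs - q x - t/2" using qx by linarith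
        show ?thesis unfolding e1 e2 by (simp add: algebra_simps)
      qed
      finally show ?thesis .
    qed
    have Ft: "f x * t \<le> 0"
      using cases
    proof (elim disjE conjE)
      assume "B = 0" thus ?thesis by (simp add: t_def)
    next
      assume g0: "\<forall>x\<in>K. 0 \<le> g x" and nB: "neg_semidef_mat B"
      have "0 \<le> f x" using g0 x Qp f_def by simp
      moreover have "t \<le> 0" using nB unfolding neg_semidef_mat_def t_def by auto
      ultimately show ?thesis by (simp add: mult_nonneg_nonpos)
    next
      assume g0: "\<forall>x\<in>K. g x \<le> 0" and pB: "pos_semidef_mat B"
      have "f x \<le> 0" using g0 x Qp f_def by (simp add: divide_nonpos_pos)
      moreover have "0 \<le> t" using pB unfolding pos_semidef_mat_def t_def by auto
      ultimately show ?thesis by (simp add: mult_nonpos_nonneg)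
    qed
    have FF: "f xs \<le> f x" using xs_min x by auto
    have n2: "0 \<le> (norm d)^2" by simp
    have s0: "0 \<le> s" using sig(1) sig(2)[of d] n2 unfolding s_def
      by (meson mult_nonneg_nonneg order_trans)
    have skk: "k*M*mu*(norm d)^2 \<le> s"
    proof -
      have "k*M*mu*(norm d)^2 \<le> \<sigma> * (norm d)^2" using sk n2 by (rule mult_right_mono)
      also have "\<dots> \<le> s" using sig(2)[of d] unfolding s_def .
      finally show ?thesis .
    qed
    have "f x + (1/k) * frechet_derivative f (at x) d + mu/2 * (norm d)^2 \<le> f xs"
      by (rule core[OF QD Ft FF Q(1) Q(2) Qs(1) mM(1) k s0 mu n2 skk])
    thus ?thesis using diff unfolding d_def by simp
  qed
  have k1: "m / M < 1" using mM by simp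
  have mMp: "0 < m / M" using mM Mp by simp
  have P1: "quasar_convex f K xs (m / M)"
    unfolding quasar_convex_def strongly_quasar_convex_def
    using key[of _ "m/M" 0] mMp k1 sig(1) by auto
  have P2: "strongly_quasar_convex f K xs ((m / M) / 2) (min_eigenvalue A / m)"
  proof -
    have "(m/M/2) * M * (\<sigma>/m) = \<sigma>/2" using mM Mp by (simp add: field_simps)
    hence sk: "(m/M/2) * M * (\<sigma>/m) \<le> \<sigma>" using sig(1) by linarith
    have "0 \<le> \<sigma>/m" using sig(1) mM by simp
    thus ?thesis unfolding strongly_quasar_convex_def \<sigma>_def[symmetric]
      using key[of _ "m/M/2" "\<sigma>/m"] mMp k1 sk by auto
  qed
  have P3: "strongly_quasar_convex f K xs (lam * (m / M))
              ((1 / lam - 1) * min_eigenvalue A / (4 * M))" if lam: "0 < lam" "lam < 1" for lam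
  proof -
    have e: "(lam*(m/M)) * M * ((1 / lam - 1) * \<sigma> / (4 * M)) = (1 - lam) * (m / M) * \<sigma> / 4"
      using lam Mp by (simp add: field_simps)
    have "(1 - lam) * (m / M) * \<sigma> \<le> 1 * 1 * \<sigma>"
      using lam k1 mMp sig(1) by (intro mult_right_mono mult_mono) auto
    hence X: "(1 - lam) * (m / M) * \<sigma> \<le> \<sigma>" by simp
    have sk: "(lam*(m/M)) * M * ((1 / lam - 1) * \<sigma> / (4 * M)) \<le> \<sigma>"
    proof -
      have "\<And>X::real. X \<le> \<sigma> \<Longrightarrow> X / 4 \<le> \<sigma>" using sig(1) by linarith
      thus ?thesis unfolding e using X by blast
    qed
    have "1 < 1 / lam" using lam by simp
    hence mu0: "0 \<le> (1 / lam - 1) * \<sigma> / (4 * M)" using sig(1) Mp by simp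
    have kk: "0 < lam * (m/M)" "lam * (m/M) \<le> m/M" "lam * (m/M) \<le> 1"
    proof -
      have a: "lam * (m/M) \<le> 1 * (m/M)" using lam mMp by (intro mult_right_mono) auto
      show "0 < lam * (m/M)" using mult_pos_pos[OF lam(1) mMp] .
      show "lam * (m/M) \<le> m/M" using a by simp
      show "lam * (m/M) \<le> 1" using a k1 by simp
    qed
    show ?thesis unfolding strongly_quasar_convex_def \<sigma>_def[symmetric]
      using key[of _ "lam * (m/M)" "(1 / lam - 1) * \<sigma> / (4 * M)"] kk mu0 sk by auto
  qed
  show ?thesis using P1 P2 P3 by blast
qed

end
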